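(* Let $\mathcal{X}$ be a finite set of $n$ agents, $\Gamma$ a merit distribution with finite expected merits, and $w_1\ge\dots\ge w_n$ position weights. Then all ranking distributions that are $1$-fair with respect to $\Gamma$ have the same expected utility $U(\pi,\Gamma)$ for the principal.
   Context: A ranking of $\mathcal{X}$ is a bijection $\sigma:\{1,\dots,n\}\to\mathcal{X}$ ($\sigma(k)$ is the agent in position $k$); a ranking distribution $\pi$ is a probability distribution over rankings, with marginals $P_\pi(x,k)=\sum_{\sigma:\sigma(k)=x}\pi(\sigma)$. A merit distribution $\Gamma$ is a probability distribution over $v\in\mathbb{R}^{\mathcal{X}}$ with pairwise distinct entries on its support. $\mathrm{Top}_k(x;v)$ is the event $|\{x': v_{x'}>v_x\}|<k$. For $\rho\in[0,1]$, $\pi$ is $\rho$-fair if $\sum_{k'=1}^{k}P_\pi(x,k')\ge\rho\cdot\Pr_{v\sim\Gamma}[\mathrm{Top}_k(x;v)]$ for all $x,k$. Utility: $U(\sigma,v)=\sum_{k=1}^n w_k v_{\sigma(k)}$, $U(\pi,\Gamma)=\mathbb{E}_{\sigma\sim\pi,v\sim\Gamma}[U(\sigma,v)]$ with $\sigma,v$ independent. *)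

theory Defs
  imports "HOL-Probability.Probability"
begin

text \<open>Agents form the finite type 'x; n = CARD('x).
  A ranking is a bijection from {1..n} to the agents (values outside {1..n} are irrelevant).\<close>

definition is_ranking :: "(nat \<Rightarrow> 'x::finite) \<Rightarrow> bool" where
  "is_ranking \<sigma> \<longleftrightarrow> bij_betw \<sigma> {1..CARD('x)} (UNIV :: 'x set)"

definition ranking_distribution :: "(nat \<Rightarrow> 'x::finite) pmf \<Rightarrow> bool" where
  "ranking_distribution \<pi> \<longleftrightarrow> (\<forall>\<sigma>\<in>set_pmf \<pi>. is_ranking \<sigma>)"

definition marg :: "(nat \<Rightarrow> 'x) pmf \<Rightarrow> 'x \<Rightarrow> nat \<Rightarrow> real" where
  "marg \<pi> x k = measure_pmf.prob \<pi> {\<sigma>. \<sigma> k = x}"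

definition merit_distribution :: "('x::finite \<Rightarrow> real) measure \<Rightarrow> bool" where
  "merit_distribution \<Gamma> \<longleftrightarrow> prob_space \<Gamma>
     \<and> sets \<Gamma> = sets (PiM (UNIV :: 'x set) (\<lambda>_. borel))
     \<and> (AE v in \<Gamma>. inj v)"

definition Top :: "nat \<Rightarrow> 'x::finite \<Rightarrow> ('x \<Rightarrow> real) \<Rightarrow> bool" where
  "Top k x v \<longleftrightarrow> card {x'. v x' > v x} < k"

definition rho_fair :: "real \<Rightarrow> ('x::finite \<Rightarrow> real) measure \<Rightarrow> (nat \<Rightarrow> 'x) pmf \<Rightarrow> bool" where
  "rho_fair \<rho> \<Gamma> \<pi> \<longleftrightarrow>
     (\<forall>x. \<forall>k\<in>{1..CARD('x)}.
        (\<Sum>k'=1..k. marg \<pi> x k') \<ge> \<rho> * measure \<Gamma> {v \<in> space \<Gamma>. Top k x v})"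

definition util :: "(nat \<Rightarrow> real) \<Rightarrow> (nat \<Rightarrow> 'x::finite) \<Rightarrow> ('x \<Rightarrow> real) \<Rightarrow> real" where
  "util w \<sigma> v = (\<Sum>k=1..CARD('x). w k * v (\<sigma> k))"

definition exp_util :: "(nat \<Rightarrow> real) \<Rightarrow> (nat \<Rightarrow> 'x::finite) pmf \<Rightarrow> ('x \<Rightarrow> real) measure \<Rightarrow> real" where
  "exp_util w \<pi> \<Gamma> = integral\<^sup>L (measure_pmf \<pi> \<Otimes>\<^sub>M \<Gamma>) (\<lambda>(\<sigma>, v). util w \<sigma> v)"

end

theory Submission imports Defs begin

lemma prod_int:
  fixes \<pi> :: "'a pmf" and \<Gamma> :: "'b measure" and c :: "'a \<Rightarrow> real" and g :: "'b \<Rightarrow> real"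
  assumes P: "prob_space \<Gamma>" and gi: "integrable \<Gamma> g" and cb: "\<And>\<sigma>. \<bar>c \<sigma>\<bar> \<le> B"
  shows "integrable (measure_pmf \<pi> \<Otimes>\<^sub>M \<Gamma>) (\<lambda>(\<sigma>,v). c \<sigma> * g v)"
    and "integral\<^sup>L (measure_pmf \<pi> \<Otimes>\<^sub>M \<Gamma>) (\<lambda>(\<sigma>,v). c \<sigma> * g v) = measure_pmf.expectation \<pi> c * integral\<^sup>L \<Gamma> g"
proof -
  interpret G: prob_space \<Gamma> by (rule P)
  interpret PP: pair_prob_space "measure_pmf \<pi>" \<Gamma> by unfold_locales
  have gm[measurable]: "g \<in> borel_measurable \<Gamma>" using gi by auto
  have cm[measurable]: "c \<in> borel_measurable (measure_pmf \<pi>)" by simp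
  have ci: "integrable (measure_pmf \<pi>) (\<lambda>\<sigma>. c \<sigma> * K)" for K
    by (rule measure_pmf.integrable_const_bound[where B="B * \<bar>K\<bar>"]) (auto simp: abs_mult intro!: mult_right_mono cb)
  have cai: "integrable (measure_pmf \<pi>) (\<lambda>\<sigma>. \<bar>c \<sigma>\<bar>)"
    by (rule measure_pmf.integrable_const_bound[where B="B"]) (auto intro!: cb)
  show I: "integrable (measure_pmf \<pi> \<Otimes>\<^sub>M \<Gamma>) (\<lambda>(\<sigma>,v). c \<sigma> * g v)"
  proof (rule PP.Fubini_integrable)
    show "(\<lambda>(\<sigma>,v). c \<sigma> * g v) \<in> borel_measurable (measure_pmf \<pi> \<Otimes>\<^sub>M \<Gamma>)" by measurable
    show "integrable (measure_pmf \<pi>) (\<lambda>x. \<integral>y. norm (case (x, y) of (\<sigma>, v) \<Rightarrow> c \<sigma> * g v) \<partial>\<Gamma>)"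
      using cai by (simp add: abs_mult)
    show "AE x in measure_pmf \<pi>. integrable \<Gamma> (\<lambda>y. case (x, y) of (\<sigma>, v) \<Rightarrow> c \<sigma> * g v)"
      using gi by simp
  qed
  have "integral\<^sup>L (measure_pmf \<pi> \<Otimes>\<^sub>M \<Gamma>) (\<lambda>(\<sigma>,v). c \<sigma> * g v) = (\<integral>x. (\<integral>y. (case (x,y) of (\<sigma>,v) \<Rightarrow> c \<sigma> * g v) \<partial>\<Gamma>) \<partial>measure_pmf \<pi>)"
    using PP.integral_fst'[OF I] by simp
  also have "\<dots> = (\<integral>x. c x * integral\<^sup>L \<Gamma> g \<partial>measure_pmf \<pi>)" by simp
  also have "\<dots> = measure_pmf.expectation \<pi> c * integral\<^sup>L \<Gamma> g" by simp
  finally show "integral\<^sup>L (measure_pmf \<pi> \<Otimes>\<^sub>M \<Gamma>) (\<lambda>(\<sigma>,v). c \<sigma> * g v) = measure_pmf.expectation \<pi> c * integral\<^sup>L \<Gamma> g" .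
qed

lemma rank_card:
  fixes v :: "'x::finite \<Rightarrow> real"
  assumes "inj v" "k \<le> CARD('x)"
  shows "card {x. card {x'. v x' > v x} < k} = k"
proof -
  define r where "r x = card {x'. v x' > v x}" for x
  have lt: "r y < r x" if "v x < v y" for x y
    unfolding r_def by (rule psubset_card_mono) (use that in auto)
  have "inj r"
  proof (rule injI)
    fix x y assume "r x = r y"
    show "x = y"
    proof (rule ccontr)
      assume "x \<noteq> y"
      then have "v x \<noteq> v y" using assms(1) by (auto dest: injD)
      then show False using lt[of x y] lt[of y x] \<open>r x = r y\<close> by linarith
    qed
  qed
  have rl: "r x < CARD('x)" for x
  proof -
    have "{x'. v x' > v x} \<subset> UNIV" by auto
    then show ?thesis unfolding r_def by (metis finite psubset_card_mono)
  qed
  have "range r \<subseteq> {..<CARD('x)}" using rl by auto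
  moreover have "card (range r) = card {..<CARD('x)}"
    using \<open>inj r\<close> by (simp add: card_image)
  ultimately have rr: "range r = {..<CARD('x)}" by (intro card_subset_eq) auto
  have "{x. r x < k} = r -` {..<k}" by auto
  moreover have "card (r -` {..<k}) = card {..<k}"
    by (rule card_vimage_inj[OF \<open>inj r\<close>]) (use rr assms(2) in auto)
  ultimately show ?thesis unfolding r_def by simp
qed

lemma marg_sum: "(\<Sum>x\<in>(UNIV::'x::finite set). marg \<pi> x k) = 1"
proof -
  have "marg \<pi> x k = pmf (map_pmf (\<lambda>\<sigma>. \<sigma> k) \<pi>) x" for x
    by (simp add: marg_def pmf_map vimage_def)
  then show ?thesis by (simp add: sum_pmf_eq_1)
qed

lemma top_meas:
  fixes \<Gamma> :: "('x::finite \<Rightarrow> real) measure"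
  assumes "merit_distribution \<Gamma>"
  shows "{v\<in>space \<Gamma>. Top k x v} \<in> sets \<Gamma>"
proof -
  have S: "sets \<Gamma> = sets (PiM (UNIV :: 'x set) (\<lambda>_. borel))" using assms by (simp add: merit_distribution_def)
  have eq: "Top k x v \<longleftrightarrow> (\<Sum>x'\<in>UNIV. (if v x < v x' then 1 else 0::real)) < real k" for v
  proof -
    have "(\<Sum>x'\<in>UNIV. (if v x < v x' then 1 else 0::real)) = real (card {x'. v x' > v x})"
      by (simp add: sum.If_cases)
    then show ?thesis unfolding Top_def by simp
  qed
  have comp[measurable]: "(\<lambda>v::'x\<Rightarrow>real. v y) \<in> borel_measurable (PiM (UNIV :: 'x set) (\<lambda>_. borel))" for y
    by (rule measurable_component_singleton) simp
  have meas: "(\<lambda>v::'x\<Rightarrow>real. (\<Sum>x'\<in>UNIV. (if v x < v x' then 1 else 0::real))) \<in> borel_measurable (PiM (UNIV :: 'x set) (\<lambda>_. borel))"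
  proof -
    have cmp: "Measurable.pred (PiM (UNIV :: 'x set) (\<lambda>_. borel)) (\<lambda>v::'x\<Rightarrow>real. v a < v b)" for a b
      by (rule borel_measurable_pred_less[OF comp comp])
    show ?thesis by (intro borel_measurable_sum measurable_If cmp) simp_all
  qed
  have "{v\<in>space (PiM (UNIV :: 'x set) (\<lambda>_. borel)). (\<Sum>x'\<in>UNIV. (if (v::'x\<Rightarrow>real) x < v x' then 1 else 0::real)) < real k} \<in> sets (PiM (UNIV :: 'x set) (\<lambda>_. borel))"
    by (rule borel_measurable_less[OF meas]) simp
  then show ?thesis using S sets_eq_imp_space_eq[OF S] by (simp add: eq)
qed

lemma top_sum:
  fixes \<Gamma> :: "('x::finite \<Rightarrow> real) measure"
  assumes M: "merit_distribution \<Gamma>" and k: "k \<le> CARD('x)"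
  shows "(\<Sum>x\<in>UNIV. measure \<Gamma> {v\<in>space \<Gamma>. Top k x v}) = real k"
proof -
  interpret G: prob_space \<Gamma> using M by (simp add: merit_distribution_def)
  have AEi: "AE v in \<Gamma>. inj v" using M by (simp add: merit_distribution_def)
  have "(\<Sum>x\<in>UNIV. measure \<Gamma> {v\<in>space \<Gamma>. Top k x v}) = (\<Sum>x\<in>UNIV. integral\<^sup>L \<Gamma> (indicator {v\<in>space \<Gamma>. Top k x v}))"
    by (auto intro!: sum.cong arg_cong[where f="measure \<Gamma>"])
  also have "\<dots> = integral\<^sup>L \<Gamma> (\<lambda>v. \<Sum>x\<in>UNIV. indicator {v\<in>space \<Gamma>. Top k x v} v)"
  proof -
    have ii: "integrable \<Gamma> (indicator {v\<in>space \<Gamma>. Top k x v} :: _ \<Rightarrow> real)" for x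
      by (intro integrable_real_indicator top_meas[OF M]) (simp add: less_top[symmetric])
    show ?thesis by (rule Bochner_Integration.integral_sum[symmetric]) (rule ii)
  qed
  also have "\<dots> = integral\<^sup>L \<Gamma> (\<lambda>v. real k)"
  proof (rule integral_cong_AE)
    show "(\<lambda>v. \<Sum>x\<in>UNIV. indicator {v\<in>space \<Gamma>. Top k x v} v :: real) \<in> borel_measurable \<Gamma>"
      by (auto intro!: borel_measurable_sum borel_measurable_indicator top_meas[OF M])
    show "(\<lambda>v. real k) \<in> borel_measurable \<Gamma>" by simp
    show "AE v in \<Gamma>. (\<Sum>x\<in>UNIV. indicator {v\<in>space \<Gamma>. Top k x v} v :: real) = real k"
      using AEi AE_space
    proof eventually_elim
      case (elim v)
      have "(\<Sum>x\<in>UNIV. indicator {v\<in>space \<Gamma>. Top k x v} v :: real) = real (card {x. Top k x v})"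
        using elim(2) by (simp add: indicator_def sum.If_cases)
      also have "\<dots> = real k" using rank_card[OF elim(1) k] by (simp add: Top_def)
      finally show ?case .
    qed
  qed
  also have "\<dots> = real k" by (simp add: G.prob_space)
  finally show ?thesis .
qed

lemma fair_eq:
  fixes \<Gamma> :: "('x::finite \<Rightarrow> real) measure"
  assumes M: "merit_distribution \<Gamma>" and F: "rho_fair 1 \<Gamma> \<pi>" and k: "k \<le> CARD('x)" "1 \<le> k"
  shows "(\<Sum>k'=1..k. marg \<pi> x k') = measure \<Gamma> {v\<in>space \<Gamma>. Top k x v}"
proof -
  define C where "C y = (\<Sum>k'=1..k. marg \<pi> y k')" for y
  define p where "p y = measure \<Gamma> {v\<in>space \<Gamma>. Top k y v}" for y
  have ge: "C y \<ge> p y" for y using F k unfolding rho_fair_def C_def p_def by auto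
  have "(\<Sum>y\<in>UNIV. C y) = (\<Sum>k'=1..k. \<Sum>y\<in>UNIV. marg \<pi> y k')"
    unfolding C_def by (rule sum.swap)
  also have "\<dots> = real k" by (simp add: marg_sum)
  finally have sC: "(\<Sum>y\<in>UNIV. C y) = real k" .
  have sp: "(\<Sum>y\<in>UNIV. p y) = real k" unfolding p_def by (rule top_sum[OF M k(1)])
  have "(\<Sum>y\<in>UNIV. C y - p y) = 0" using sC sp by (simp add: sum_subtractf)
  then have "\<forall>y\<in>UNIV. C y - p y = 0"
    by (subst sum_nonneg_eq_0_iff[symmetric]) (use ge in auto)
  then show ?thesis unfolding C_def p_def by auto
qed

lemma marg_eq:
  fixes \<Gamma> :: "('x::finite \<Rightarrow> real) measure"
  assumes M: "merit_distribution \<Gamma>" and F1: "rho_fair 1 \<Gamma> \<pi>1" and F2: "rho_fair 1 \<Gamma> \<pi>2"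
    and k: "k \<in> {1..CARD('x)}"
  shows "marg \<pi>1 x k = marg \<pi>2 x k"
proof -
  have C: "(\<Sum>k'=1..j. marg \<pi>1 x k') = (\<Sum>k'=1..j. marg \<pi>2 x k')" if "j \<le> CARD('x)" for j
  proof (cases "j = 0")
    case True then show ?thesis by simp
  next
    case False then show ?thesis using fair_eq[OF M F1 that] fair_eq[OF M F2 that] by simp
  qed
  obtain j where j: "k = Suc j" using k by (cases k) auto
  have "marg \<pi>1 x k = (\<Sum>k'=1..Suc j. marg \<pi>1 x k') - (\<Sum>k'=1..j. marg \<pi>1 x k')" using j by simp
  also have "\<dots> = (\<Sum>k'=1..Suc j. marg \<pi>2 x k') - (\<Sum>k'=1..j. marg \<pi>2 x k')"
    using C[of j] C[of "Suc j"] k j by simp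
  also have "\<dots> = marg \<pi>2 x k" using j by simp
  finally show ?thesis .
qed

lemma exp_util_formula:
  fixes \<Gamma> :: "('x::finite \<Rightarrow> real) measure"
  assumes M: "merit_distribution \<Gamma>" and I: "\<And>x. integrable \<Gamma> (\<lambda>v. v x)"
  shows "exp_util w \<pi> \<Gamma> = (\<Sum>k=1..CARD('x). \<Sum>x\<in>UNIV. w k * marg \<pi> x k * integral\<^sup>L \<Gamma> (\<lambda>v. v x))"
proof -
  have P: "prob_space \<Gamma>" using M by (simp add: merit_distribution_def)
  define c where "c k x \<sigma> = w k * indicator {\<sigma>::nat\<Rightarrow>'x. \<sigma> k = x} \<sigma>" for k x \<sigma>
  have cb: "\<bar>c k x \<sigma>\<bar> \<le> \<bar>w k\<bar>" for k x \<sigma> unfolding c_def by (simp add: indicator_def)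
  have ut: "util w \<sigma> v = (\<Sum>k=1..CARD('x). \<Sum>x\<in>UNIV. c k x \<sigma> * v x)" for \<sigma> v
  proof -
    have vk: "v (\<sigma> k) = (\<Sum>x\<in>UNIV. indicator {\<sigma>::nat\<Rightarrow>'x. \<sigma> k = x} \<sigma> * v x)" for k
      by (simp add: indicator_def)
    show ?thesis unfolding util_def c_def mult.assoc
      by (intro sum.cong refl) (simp only: vk[symmetric] sum_distrib_left[symmetric])
  qed
  have ints: "integrable (measure_pmf \<pi> \<Otimes>\<^sub>M \<Gamma>) (\<lambda>(\<sigma>,v). c k x \<sigma> * v x)" for k x
    by (rule prod_int(1)[OF P I[of x] cb[of k x]])
  have intv: "integral\<^sup>L (measure_pmf \<pi> \<Otimes>\<^sub>M \<Gamma>) (\<lambda>(\<sigma>,v). c k x \<sigma> * v x) = w k * marg \<pi> x k * integral\<^sup>L \<Gamma> (\<lambda>v. v x)" for k x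
  proof -
    have "measure_pmf.expectation \<pi> (c k x) = w k * marg \<pi> x k"
      unfolding c_def marg_def by simp
    then show ?thesis using prod_int(2)[OF P I[of x] cb[of k x], where \<pi>=\<pi>] by simp
  qed
  have "exp_util w \<pi> \<Gamma> = integral\<^sup>L (measure_pmf \<pi> \<Otimes>\<^sub>M \<Gamma>) (\<lambda>z. \<Sum>k=1..CARD('x). \<Sum>x\<in>UNIV. (\<lambda>(\<sigma>,v). c k x \<sigma> * v x) z)"
    unfolding exp_util_def by (intro Bochner_Integration.integral_cong) (auto simp: ut)
  also have "\<dots> = (\<Sum>k=1..CARD('x). \<Sum>x\<in>UNIV. integral\<^sup>L (measure_pmf \<pi> \<Otimes>\<^sub>M \<Gamma>) (\<lambda>(\<sigma>,v). c k x \<sigma> * v x))"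
    by (simp add: ints Bochner_Integration.integral_sum Bochner_Integration.integrable_sum)
  also have "\<dots> = (\<Sum>k=1..CARD('x). \<Sum>x\<in>UNIV. w k * marg \<pi> x k * integral\<^sup>L \<Gamma> (\<lambda>v. v x))"
    by (simp add: intv)
  finally show ?thesis .
qed

theorem lemma2:
  fixes \<Gamma> :: "('x::finite \<Rightarrow> real) measure"
    and w :: "nat \<Rightarrow> real"
    and \<pi>1 \<pi>2 :: "(nat \<Rightarrow> 'x) pmf"
  assumes "merit_distribution \<Gamma>"
    and "\<And>x. integrable \<Gamma> (\<lambda>v. v x)"
    and "\<And>i j. 1 \<le> i \<Longrightarrow> i \<le> j \<Longrightarrow> j \<le> CARD('x) \<Longrightarrow> w j \<le> w i"
    and "ranking_distribution \<pi>1" and "rho_fair 1 \<Gamma> \<pi>1"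
    and "ranking_distribution \<pi>2" and "rho_fair 1 \<Gamma> \<pi>2"
  shows "exp_util w \<pi>1 \<Gamma> = exp_util w \<pi>2 \<Gamma>"
  unfolding exp_util_formula[OF assms(1,2)]
  using marg_eq[OF assms(1) assms(5) assms(7)]
  by (intro sum.cong refl) auto

end
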